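(* Let $L$ be a frame. The map $\nu(F)=\bigcap_{a\in F}\mathfrak o(a)$ restricts to an order isomorphism from $(\mathsf R(L),\sqsubseteq)$ onto $(\{\mathrm{fit}(S)\mid S\in\mathcal S_c(L)\},\subseteq)$, with inverse $S\mapsto\{a\in L\mid S\subseteq\mathfrak o(a)\}$.
   Context: A frame is a complete lattice $L$ with $(\bigvee A)\wedge b=\bigvee_{a\in A}(a\wedge b)$, Heyting implication $\to$. A sublocale is a subset $S\subseteq L$ closed under all meets with $a\to s\in S$ for $a\in L,s\in S$; sublocales form a coframe $\mathsf{Sl}(L)$ under inclusion with joins $\bigvee_i S_i=\{\bigwedge A\mid A\subseteq\bigcup_i S_i\}$. $\mathfrak o(a)=\{a\to b\mid b\in L\}$, $\mathfrak c(a)={\uparrow}a$. $\mathrm{fit}(S)=\bigcap\{\mathfrak o(a)\mid S\subseteq\mathfrak o(a)\}$. $\mathcal S_c(L)$ is the set of joins in $\mathsf{Sl}(L)$ of closed sublocales $\mathfrak c(a)$. Filters are nonempty up-closed subsets closed under finite meets, ordered by reverse inclusion $\sqsubseteq$. $\mathsf R(L)$ is the set of regular filters, i.e. filters of the form $\{x\in L\mid\forall b\in G,\ b\vee x=1\}$ for a filter $G$ (equivalently, intersections of closed filters $\{x\mid x\vee a=1\}$). *)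

theory Defs
  imports Main
begin

definition frame_law :: "('a::complete_lattice) itself \<Rightarrow> bool" where
  "frame_law _ \<longleftrightarrow> (\<forall>(A::'a set) b. inf (Sup A) b = Sup ((\<lambda>a. inf a b) ` A))"

definition himp :: "'a::complete_lattice \<Rightarrow> 'a \<Rightarrow> 'a" where
  "himp a b = Sup {c. inf c a \<le> b}"

definition is_sublocale :: "('a::complete_lattice) set \<Rightarrow> bool" where
  "is_sublocale S \<longleftrightarrow> (\<forall>A. A \<subseteq> S \<longrightarrow> Inf A \<in> S) \<and> (\<forall>a s. s \<in> S \<longrightarrow> himp a s \<in> S)"

definition sl_join :: "('a::complete_lattice) set set \<Rightarrow> 'a set" where
  "sl_join \<S> = {Inf A | A. A \<subseteq> \<Union>\<S>}"

definition open_sl :: "'a::complete_lattice \<Rightarrow> 'a set" where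
  "open_sl a = {himp a b | b. True}"

definition closed_sl :: "'a::complete_lattice \<Rightarrow> 'a set" where
  "closed_sl a = {x. a \<le> x}"

definition fit :: "('a::complete_lattice) set \<Rightarrow> 'a set" where
  "fit S = \<Inter>{open_sl a | a. S \<subseteq> open_sl a}"

definition Sc :: "('a::complete_lattice) set set" where
  "Sc = {sl_join (closed_sl ` A) | A. True}"

definition is_filter :: "('a::complete_lattice) set \<Rightarrow> bool" where
  "is_filter F \<longleftrightarrow> F \<noteq> {} \<and> (\<forall>x y. x \<in> F \<longrightarrow> x \<le> y \<longrightarrow> y \<in> F)
      \<and> (\<forall>x y. x \<in> F \<longrightarrow> y \<in> F \<longrightarrow> inf x y \<in> F)"

definition filter_le :: "('a::complete_lattice) set \<Rightarrow> 'a set \<Rightarrow> bool" where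
  "filter_le F G \<longleftrightarrow> G \<subseteq> F"

definition regular_filters :: "('a::complete_lattice) set set" where
  "regular_filters = {F. \<exists>G. is_filter G \<and> F = {x. \<forall>b\<in>G. sup b x = top}}"

definition nu :: "('a::complete_lattice) set \<Rightarrow> 'a set" where
  "nu F = (\<Inter>a\<in>F. open_sl a)"

definition nu_inv :: "('a::complete_lattice) set \<Rightarrow> 'a set" where
  "nu_inv S = {a. S \<subseteq> open_sl a}"

end

theory Submission
  imports Defs
begin

lemma frame_dist:
  assumes "frame_law TYPE('a::complete_lattice)"
  shows "inf (sup x y) (z::'a) = sup (inf x z) (inf y z)"
proof -
  have "inf (Sup {x,y}) z = Sup ((\<lambda>a. inf a z) ` {x,y})"
    using assms unfolding frame_law_def by blast
  thus ?thesis by simp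
qed

lemma frame_dist2:
  assumes "frame_law TYPE('a::complete_lattice)"
  shows "inf (z::'a) (sup x y) = sup (inf z x) (inf z y)"
  using frame_dist[OF assms, of x y z] by (simp add: inf_commute)

lemma himp_mp:
  assumes "frame_law TYPE('a::complete_lattice)"
  shows "inf (himp a x) a \<le> (x::'a)"
proof -
  have "inf (Sup {c. inf c a \<le> x}) a = Sup ((\<lambda>c. inf c a) ` {c. inf c a \<le> x})"
    using assms unfolding frame_law_def by blast
  also have "\<dots> \<le> x" by (rule SUP_least) simp
  finally show ?thesis unfolding himp_def .
qed

lemma himp_ge: "inf c a \<le> x \<Longrightarrow> (c::'a::complete_lattice) \<le> himp a x"
  unfolding himp_def by (rule Sup_upper) simp

lemma himp_mono:
  assumes "frame_law TYPE('a::complete_lattice)" "y \<le> (x::'a)"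
  shows "himp a y \<le> himp a x"
  using himp_mp[OF assms(1), of a y] assms(2) by (intro himp_ge) simp

lemma himp_le:
  assumes "frame_law TYPE('a::complete_lattice)" "sup a x = (top::'a)"
  shows "himp a x \<le> x"
proof -
  let ?h = "himp a x"
  have "?h = inf ?h (sup a x)" using assms(2) by simp
  also have "\<dots> = sup (inf ?h a) (inf ?h x)" by (rule frame_dist2[OF assms(1)])
  also have "\<dots> \<le> x" using himp_mp[OF assms(1), of a x] by simp
  finally show ?thesis .
qed

lemma himp_top: "a \<le> b \<Longrightarrow> himp a (b::'a::complete_lattice) = top"
  by (rule top_le, rule himp_ge) simp

lemma open_sup_top:
  assumes "frame_law TYPE('a::complete_lattice)" "sup a c \<in> open_sl (a::'a)"
  shows "sup a c = top"
proof -
  obtain b where b: "sup a c = himp a b" using assms(2) unfolding open_sl_def by blast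
  have "a \<le> himp a b" using b by (metis sup_ge1)
  hence "inf (himp a b) a = a" by (simp add: inf_absorb2)
  hence "a \<le> b" using himp_mp[OF assms(1), of a b] by simp
  thus ?thesis using b himp_top by simp
qed

lemma Inf_open:
  assumes "frame_law TYPE('a::complete_lattice)" "\<forall>x\<in>B. sup a x = (top::'a)"
  shows "Inf B \<in> open_sl a"
proof -
  have "himp a (Inf B) = Inf B"
  proof (rule antisym)
    show "himp a (Inf B) \<le> Inf B"
    proof (rule Inf_greatest)
      fix x assume "x \<in> B"
      have "himp a (Inf B) \<le> himp a x" by (rule himp_mono[OF assms(1)]) (simp add: Inf_lower \<open>x \<in> B\<close>)
      also have "\<dots> \<le> x" using himp_le[OF assms(1)] assms(2) \<open>x \<in> B\<close> by blast
      finally show "himp a (Inf B) \<le> x" .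
    qed
    show "Inf B \<le> himp a (Inf B)" by (rule himp_ge) simp
  qed
  thus ?thesis unfolding open_sl_def by (metis (mono_tags, lifting) mem_Collect_eq)
qed

lemma keyK:
  assumes "frame_law TYPE('a::complete_lattice)"
  shows "nu_inv (sl_join (closed_sl ` A)) = {a::'a. \<forall>c\<in>A. sup c a = top}"
proof (intro set_eqI iffI)
  fix a assume "a \<in> nu_inv (sl_join (closed_sl ` A))"
  hence S: "sl_join (closed_sl ` A) \<subseteq> open_sl a" unfolding nu_inv_def by simp
  show "a \<in> {a. \<forall>c\<in>A. sup c a = top}"
  proof (simp, intro ballI)
    fix c assume "c \<in> A"
    have "{sup a c} \<subseteq> \<Union> (closed_sl ` A)" using \<open>c \<in> A\<close> unfolding closed_sl_def by (auto intro: sup_ge2)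
    hence "Inf {sup a c} \<in> sl_join (closed_sl ` A)" unfolding sl_join_def by blast
    hence "sup a c \<in> open_sl a" using S by auto
    hence "sup a c = top" by (rule open_sup_top[OF assms])
    thus "sup c a = top" by (simp add: sup_commute)
  qed
next
  fix a assume a: "a \<in> {a::'a. \<forall>c\<in>A. sup c a = top}"
  show "a \<in> nu_inv (sl_join (closed_sl ` A))"
    unfolding nu_inv_def
  proof (simp, rule subsetI)
    fix y assume "y \<in> sl_join (closed_sl ` A)"
    then obtain B where y: "y = Inf B" and B: "B \<subseteq> \<Union> (closed_sl ` A)" unfolding sl_join_def by blast
    have "\<forall>x\<in>B. sup a x = top"
    proof
      fix x assume "x \<in> B"
      then obtain c where "c \<in> A" "c \<le> x" using B unfolding closed_sl_def by auto
      hence "sup c a \<le> sup a x" by (simp add: le_supI1 le_supI2)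
      moreover have "sup c a = top" using a \<open>c \<in> A\<close> by simp
      ultimately show "sup a x = top" by (metis top_le)
    qed
    thus "y \<in> open_sl a" using Inf_open[OF assms] y by blast
  qed
qed

lemma reg_of:
  assumes "frame_law TYPE('a::complete_lattice)"
  shows "{a::'a. \<forall>c\<in>A. sup c a = top} \<in> regular_filters"
proof -
  define G where "G = {y::'a. \<forall>a. (\<forall>c\<in>A. sup c a = top) \<longrightarrow> sup y a = top}"
  have "is_filter G"
    unfolding is_filter_def
  proof (intro conjI allI impI)
    have "top \<in> G" unfolding G_def by simp
    thus "G \<noteq> {}" by blast
  next
    fix x y assume "x \<in> G" "x \<le> y"
    thus "y \<in> G" unfolding G_def by (auto simp: top_le) (metis sup_mono order_refl top_le)
  next
    fix x y assume x: "x \<in> G" and y: "y \<in> G"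
    show "inf x y \<in> G" unfolding G_def
    proof (intro CollectI allI impI)
      fix a assume h: "\<forall>c\<in>A. sup c a = top"
      have 1: "sup x a = top" "sup y a = top" using x y h unfolding G_def by auto
      have "top = inf (sup x a) (sup y a)" using 1 by simp
      also have "\<dots> = sup (inf x (sup y a)) (inf a (sup y a))" by (rule frame_dist[OF assms])
      also have "\<dots> = sup (sup (inf x y) (inf x a)) (inf a (sup y a))" by (simp add: frame_dist2[OF assms])
      also have "\<dots> \<le> sup (inf x y) a"
        by (simp add: le_supI1 le_supI2 le_infI2)
      finally show "sup (inf x y) a = top" by (simp add: top_le)
    qed
  qed
  moreover have "{a::'a. \<forall>c\<in>A. sup c a = top} = {x. \<forall>b\<in>G. sup b x = top}"
  proof (intro set_eqI iffI)
    fix x assume "x \<in> {a::'a. \<forall>c\<in>A. sup c a = top}"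
    thus "x \<in> {x. \<forall>b\<in>G. sup b x = top}" unfolding G_def by blast
  next
    fix x assume x: "x \<in> {x. \<forall>b\<in>G. sup b x = top}"
    have "A \<subseteq> G" unfolding G_def by blast
    thus "x \<in> {a::'a. \<forall>c\<in>A. sup c a = top}" using x by blast
  qed
  ultimately show ?thesis unfolding regular_filters_def by blast
qed

lemma galois1: "nu_inv (nu (nu_inv S)) = nu_inv S"
  unfolding nu_def nu_inv_def by blast

lemma galois2: "nu (nu_inv (nu F)) = nu F"
  unfolding nu_def nu_inv_def by blast

lemma fit_eq: "fit S = nu (nu_inv S)"
  unfolding fit_def nu_def nu_inv_def by auto

theorem mainTheorem13:
  assumes "frame_law TYPE('a::complete_lattice)"
  shows "bij_betw (nu :: 'a set \<Rightarrow> 'a set) regular_filters {fit S | S. S \<in> (Sc :: 'a set set)}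
       \<and> (\<forall>F\<in>(regular_filters :: 'a set set). \<forall>G\<in>regular_filters.
            filter_le F G \<longleftrightarrow> nu F \<subseteq> nu G)
       \<and> (\<forall>F\<in>(regular_filters :: 'a set set). nu_inv (nu F) = F)
       \<and> (\<forall>T\<in>{fit S | S. S \<in> (Sc :: 'a set set)}. nu_inv T \<in> regular_filters \<and> nu (nu_inv T) = T)"
proof -
  have P: "\<exists>A. F = nu_inv (sl_join (closed_sl ` A))" if "F \<in> (regular_filters :: 'a set set)" for F
  proof -
    have "\<exists>G. is_filter G \<and> F = {x. \<forall>b\<in>G. sup b x = top}" using that unfolding regular_filters_def by (rule CollectD)
    then obtain G where "F = {x. \<forall>b\<in>G. sup b x = top}" by (elim exE conjE)
    hence "F = nu_inv (sl_join (closed_sl ` G))" by (simp only: keyK[OF assms])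
    thus ?thesis by (rule exI)
  qed
  have Q: "\<exists>A. T = nu (nu_inv (sl_join (closed_sl ` A)))" if hT: "T \<in> {fit S | S. S \<in> (Sc :: 'a set set)}" for T
  proof -
    obtain S where "T = fit S" "S \<in> Sc" using hT by blast
    then obtain A where "S = sl_join (closed_sl ` A)" unfolding Sc_def by blast
    thus ?thesis using \<open>T = fit S\<close> fit_eq by blast
  qed
  have C3: "\<forall>F\<in>(regular_filters :: 'a set set). nu_inv (nu F) = F"
  proof
    fix F :: "'a set" assume "F \<in> regular_filters"
    then obtain A where "F = nu_inv (sl_join (closed_sl ` A))" using P by blast
    thus "nu_inv (nu F) = F" using galois1 by simp
  qed
  have C4: "\<forall>T\<in>{fit S | S. S \<in> (Sc :: 'a set set)}. nu_inv T \<in> regular_filters \<and> nu (nu_inv T) = T"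
  proof
    fix T assume "T \<in> {fit S | S. S \<in> (Sc :: 'a set set)}"
    then obtain A where T: "T = nu (nu_inv (sl_join (closed_sl ` A)))" using Q by blast
    have "nu_inv T = nu_inv (sl_join (closed_sl ` A))" using T galois1 by simp
    thus "nu_inv T \<in> regular_filters \<and> nu (nu_inv T) = T"
      using keyK[OF assms, of A] reg_of[OF assms, of A] T by simp
  qed
  have C2: "\<forall>F\<in>(regular_filters :: 'a set set). \<forall>G\<in>regular_filters.
            filter_le F G \<longleftrightarrow> nu F \<subseteq> nu G"
  proof (intro ballI iffI)
    fix F G :: "'a set" assume "filter_le F G"
    thus "nu F \<subseteq> nu G" unfolding filter_le_def nu_def by blast
  next
    fix F G :: "'a set" assume F: "F \<in> regular_filters" and G: "G \<in> regular_filters" and "nu F \<subseteq> nu G"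
    hence "nu_inv (nu G) \<subseteq> nu_inv (nu F)" unfolding nu_inv_def by blast
    thus "filter_le F G" using C3 F G unfolding filter_le_def by simp
  qed
  have C1: "bij_betw (nu :: 'a set \<Rightarrow> 'a set) regular_filters {fit S | S. S \<in> (Sc :: 'a set set)}"
    unfolding bij_betw_def
  proof
    show "inj_on nu (regular_filters :: 'a set set)"
    proof (rule inj_onI)
      fix F G :: "'a set" assume "F \<in> regular_filters" "G \<in> regular_filters" "nu F = nu G"
      thus "F = G" using C3 by (metis (no_types))
    qed
    show "nu ` (regular_filters :: 'a set set) = {fit S | S. S \<in> (Sc :: 'a set set)}"
    proof (intro set_eqI iffI)
      fix T assume "T \<in> nu ` (regular_filters :: 'a set set)"
      then obtain F where F: "F \<in> regular_filters" "T = nu F" by blast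
      then obtain A where "F = nu_inv (sl_join (closed_sl ` A))" using P by blast
      hence "T = fit (sl_join (closed_sl ` A))" using F by (simp add: fit_eq)
      thus "T \<in> {fit S | S. S \<in> (Sc :: 'a set set)}" unfolding Sc_def by blast
    next
      fix T assume "T \<in> {fit S | S. S \<in> (Sc :: 'a set set)}"
      hence "nu_inv T \<in> regular_filters" "T = nu (nu_inv T)" using C4 by auto
      thus "T \<in> nu ` (regular_filters :: 'a set set)" by blast
    qed
  qed
  from C1 C2 C3 C4 show ?thesis by (intro conjI)
qed

end
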